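(* Let $d\ge 1$ and $L\ge 1$ be integers, and for $1\le i,j\le d$ and $0\le \ell\le L$ let $P_i(x,u)$ and $Q_{i,j,\ell}(x,u)$ be polynomials in $x,u$ with nonnegative coefficients. Let $F_1(x,u),\dots,F_d(x,u)$ be formal power series in $x,u$ forming a solution of the positive linear system of catalytic equations \[ F_i(x,u) = P_i(x,u) + x\sum_{j=1}^d\sum_{\ell=0}^L Q_{i,j,\ell}(x,u)\,\Delta^\ell F_j(x,u),\qquad 1\le i\le d, \] and write $F_i(x,u)=\sum_{k\ge0}F_{i;k}(x)u^k$. Then for every $1\le i\le d$ and every $k\ge 0$ the power series $F_{i;k}(x)$ corresponds to a finite grammar.
   Context: For a power series $G(x,u)=\sum_{k\ge0}G_k(x)u^k$ and an integer $\ell\ge1$, the $\ell$-th difference is $\Delta^\ell G(x,u)=\bigl(G(x,u)-G_0(x)-G_1(x)u-\cdots-G_{\ell-1}(x)u^{\ell-1}\bigr)/u^\ell=\sum_{k\ge0}G_{k+\ell}(x)u^k$, and $\Delta^0G=G$. A power series $F(x)$ is said to correspond to a finite grammar (or to satisfy a positive polynomial system) if there exist $m\ge1$ and polynomials $R_1,\dots,R_m$ in $x,y_1,\dots,y_m$ with nonnegative coefficients such that the system $y_r=R_r(x,y_1,\dots,y_m)$, $1\le r\le m$, has a unique power series solution $(y_1(x),\dots,y_m(x))$ and $F(x)=y_1(x)$. *)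

theory Defs
  imports "HOL-Computational_Algebra.Formal_Power_Series"
begin

text \<open>Bivariate formal power series in x,u are represented as real fps fps:
  the outer variable is u, and the k-th outer coefficient is the series F_k(x).\<close>

definition Delta :: "nat \<Rightarrow> 'a::comm_ring_1 fps fps \<Rightarrow> 'a fps fps" where
  "Delta l G = fps_shift l G"

definition nonneg_bipoly :: "real fps fps \<Rightarrow> bool" where
  "nonneg_bipoly p \<longleftrightarrow>
     (\<forall>k n. fps_nth (fps_nth p k) n \<ge> 0) \<and>
     (\<exists>N. \<forall>k n. (N < k \<or> N < n) \<longrightarrow> fps_nth (fps_nth p k) n = 0)"

text \<open>A multivariate polynomial in x, y_0, ..., y_{m-1}: a coefficient function on
  monomials (a, e), standing for x^a * prod_i y_i^(e i), with finite support.\<close>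
definition nonneg_mpoly :: "nat \<Rightarrow> ((nat \<times> (nat \<Rightarrow> nat)) \<Rightarrow> real) \<Rightarrow> bool" where
  "nonneg_mpoly m R \<longleftrightarrow>
     finite {mn. R mn \<noteq> 0} \<and> (\<forall>mn. R mn \<ge> 0) \<and>
     (\<forall>mn. R mn \<noteq> 0 \<longrightarrow> (\<forall>i\<ge>m. snd mn i = 0))"

definition eval_mpoly :: "((nat \<times> (nat \<Rightarrow> nat)) \<Rightarrow> real) \<Rightarrow> real fps list \<Rightarrow> real fps" where
  "eval_mpoly R ys =
     (\<Sum>mn\<in>{mn. R mn \<noteq> 0}. fps_const (R mn) * fps_X ^ fst mn *
        (\<Prod>i<length ys. (ys ! i) ^ snd mn i))"

definition is_solution :: "((nat \<times> (nat \<Rightarrow> nat)) \<Rightarrow> real) list \<Rightarrow> real fps list \<Rightarrow> bool" where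
  "is_solution Rs ys \<longleftrightarrow> length ys = length Rs \<and>
     (\<forall>r<length Rs. ys ! r = eval_mpoly (Rs ! r) ys)"

definition finite_grammar :: "real fps \<Rightarrow> bool" where
  "finite_grammar F \<longleftrightarrow>
     (\<exists>m\<ge>1. \<exists>Rs. length Rs = m \<and> (\<forall>r<m. nonneg_mpoly m (Rs ! r)) \<and>
        (\<exists>ys. is_solution Rs ys \<and> (\<forall>ys'. is_solution Rs ys' \<longrightarrow> ys' = ys) \<and> F = ys ! 0))"

end

theory Submission
  imports Defs "HOL-Library.Product_Lexorder"
begin

unbundle fps_syntax




datatype 'v pexp = PC "real fps" nat | PV 'v | PAdd "'v pexp" "'v pexp"
  | PMul "'v pexp" "'v pexp" | PX "'v pexp"

primrec sem :: "('v \<Rightarrow> real fps) \<Rightarrow> 'v pexp \<Rightarrow> real fps" where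
  "sem f (PC p n) = (\<Sum>b\<le>n. fps_const (p $ b) * fps_X ^ b)"
| "sem f (PV v) = f v"
| "sem f (PAdd a b) = sem f a + sem f b"
| "sem f (PMul a b) = sem f a * sem f b"
| "sem f (PX a) = fps_X * sem f a"

primrec pvars :: "'v pexp \<Rightarrow> 'v set" where
  "pvars (PC p n) = {}"
| "pvars (PV v) = {v}"
| "pvars (PAdd a b) = pvars a \<union> pvars b"
| "pvars (PMul a b) = pvars a \<union> pvars b"
| "pvars (PX a) = pvars a"

primrec xg :: "'v pexp \<Rightarrow> bool" where
  "xg (PC p n) = False"
| "xg (PV v) = False"
| "xg (PAdd a b) = (xg a \<and> xg b)"
| "xg (PMul a b) = (xg a \<or> xg b)"
| "xg (PX a) = True"

primrec guarded :: "'v pexp \<Rightarrow> bool" where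
  "guarded (PC p n) = True"
| "guarded (PV v) = False"
| "guarded (PAdd a b) = (guarded a \<and> guarded b)"
| "guarded (PMul a b) = ((guarded a \<and> guarded b) \<or> xg a \<or> xg b)"
| "guarded (PX a) = True"

lemma xg_guarded: "xg e \<Longrightarrow> guarded e"
  by (induction e) auto

lemma xg_nth0: "xg e \<Longrightarrow> sem f e $ 0 = 0"
  by (induction e) auto

primrec pnonneg :: "'v pexp \<Rightarrow> bool" where
  "pnonneg (PC p n) = (\<forall>b\<le>n. p $ b \<ge> 0)"
| "pnonneg (PV v) = True"
| "pnonneg (PAdd a b) = (pnonneg a \<and> pnonneg b)"
| "pnonneg (PMul a b) = (pnonneg a \<and> pnonneg b)"
| "pnonneg (PX a) = pnonneg a"

definition agree :: "nat \<Rightarrow> real fps \<Rightarrow> real fps \<Rightarrow> bool" where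
  "agree m f g \<longleftrightarrow> (\<forall>k<m. f $ k = g $ k)"

lemma agree_mult: "agree m a b \<Longrightarrow> agree m c d \<Longrightarrow> agree m (a * c) (b * d)"
  unfolding agree_def fps_mult_nth by (auto intro!: sum.cong)

lemma agree_add: "agree m a b \<Longrightarrow> agree m c d \<Longrightarrow> agree m (a + c) (b + d)"
  unfolding agree_def by auto

lemma agree_X: "agree m a b \<Longrightarrow> agree (Suc m) (fps_X * a) (fps_X * b)"
  unfolding agree_def by auto

lemma agree_mono: "agree m a b \<Longrightarrow> n \<le> m \<Longrightarrow> agree n a b"
  unfolding agree_def by auto

lemma agree_refl: "agree m a a"
  unfolding agree_def by auto

lemma agree_sym: "agree m a b \<Longrightarrow> agree m b a"
  unfolding agree_def by auto

lemma agree_trans: "agree m a b \<Longrightarrow> agree m b c \<Longrightarrow> agree m a c"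
  unfolding agree_def by auto

lemma agree_all: "(\<And>m. agree m a b) \<Longrightarrow> a = b"
  unfolding agree_def by (metis fps_ext lessI)

lemma sem_agree:
  "(\<forall>v\<in>pvars e. agree m (f v) (g v)) \<Longrightarrow> agree m (sem f e) (sem g e)"
  by (induction e) (auto intro: agree_add agree_mult agree_refl)

lemma agree_mult0:
  assumes "agree (Suc m) a b" "agree m c d" "a $ 0 = 0" "b $ 0 = 0"
  shows "agree (Suc m) (a * c) (b * d)"
  unfolding agree_def
proof (intro allI impI)
  fix k assume k: "k < Suc m"
  show "(a * c) $ k = (b * d) $ k"
    unfolding fps_mult_nth
  proof (rule sum.cong)
    fix i assume i: "i \<in> {0..k}"
    show "a $ i * c $ (k - i) = b $ i * d $ (k - i)"
    proof (cases "i = 0")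
      case True then show ?thesis using assms by simp
    next
      case False then show ?thesis using assms k i unfolding agree_def by auto
    qed
  qed simp
qed

lemma sem_agree_guarded:
  "guarded e \<Longrightarrow> (\<forall>v\<in>pvars e. agree m (f v) (g v)) \<Longrightarrow> agree (Suc m) (sem f e) (sem g e)"
proof (induction e)
  case (PMul a b)
  have A: "\<forall>v\<in>pvars a. agree m (f v) (g v)" and B: "\<forall>v\<in>pvars b. agree m (f v) (g v)"
    using PMul.prems by auto
  consider "guarded a \<and> guarded b" | "xg a" | "xg b" using PMul.prems by auto
  then show ?case
  proof cases
    case 1 then show ?thesis using PMul A B by (auto intro: agree_mult)
  next
    case 2
    then have "agree (Suc m) (sem f a) (sem g a)" using PMul.IH(1) A xg_guarded by blast
    then show ?thesis using agree_mult0 sem_agree[OF B] xg_nth0[OF 2] by simp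
  next
    case 3
    then have "agree (Suc m) (sem f b) (sem g b)" using PMul.IH(2) B xg_guarded by blast
    then have "agree (Suc m) (sem f b * sem f a) (sem g b * sem g a)"
      using agree_mult0 sem_agree[OF A] xg_nth0[OF 3] by blast
    then show ?thesis by (simp add: mult.commute)
  qed
qed (auto intro: agree_add agree_refl agree_X sem_agree)

lemma sys_unique:
  assumes "\<forall>v\<in>S. guarded (eqs v) \<and> pvars (eqs v) \<subseteq> S"
    and "\<forall>v\<in>S. f v = sem f (eqs v)" and "\<forall>v\<in>S. g v = sem g (eqs v)"
  shows "\<forall>v\<in>S. f v = g v"
proof -
  have "\<forall>v\<in>S. agree m (f v) (g v)" for m
  proof (induction m)
    case 0 then show ?case by (simp add: agree_def)
  next
    case (Suc m)
    show ?case
    proof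
      fix v assume v: "v \<in> S"
      have "agree (Suc m) (sem f (eqs v)) (sem g (eqs v))"
        using Suc assms(1) v by (intro sem_agree_guarded) auto
      then show "agree (Suc m) (f v) (g v)" using assms(2,3) v by simp
    qed
  qed
  then show ?thesis by (auto intro: agree_all)
qed

lemma sys_exists:
  assumes "\<forall>v\<in>S. guarded (eqs v) \<and> pvars (eqs v) \<subseteq> S"
  shows "\<exists>f. \<forall>v\<in>S. f v = sem f (eqs v)"
proof -
  define Phi where "Phi = (\<lambda>f v. sem f (eqs v))"
  define Y where "Y = (\<lambda>n. (Phi ^^ n) (\<lambda>_. 0))"
  have YS: "Y (Suc n) v = sem (Y n) (eqs v)" for n v
    by (simp add: Y_def Phi_def)
  have stepA: "\<forall>v\<in>S. agree n (Y n v) (Y (Suc n) v)" for n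
  proof (induction n)
    case 0 then show ?case by (simp add: agree_def)
  next
    case (Suc n)
    show ?case
    proof
      fix v assume v: "v \<in> S"
      have "agree (Suc n) (sem (Y n) (eqs v)) (sem (Y (Suc n)) (eqs v))"
        using Suc assms v by (intro sem_agree_guarded) blast+
      then show "agree (Suc n) (Y (Suc n) v) (Y (Suc (Suc n)) v)"
        by (simp only: YS)
    qed
  qed
  have far: "agree n (Y n v) (Y p v)" if "v \<in> S" "n \<le> p" for n p v
    using that(2)
  proof (induction p rule: dec_induct)
    case base then show ?case by (rule agree_refl)
  next
    case (step p)
    have "agree p (Y p v) (Y (Suc p) v)" using stepA \<open>v\<in>S\<close> by blast
    then have "agree n (Y p v) (Y (Suc p) v)" using step(1) by (rule agree_mono)
    with step(3) show ?case by (rule agree_trans)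
  qed
  define sol where "sol = (\<lambda>v. Abs_fps (\<lambda>k. Y (Suc k) v $ k))"
  have solY: "agree n (sol v) (Y n v)" if "v \<in> S" for n v
    unfolding agree_def
  proof (intro allI impI)
    fix k assume "k < n"
    then have "agree (Suc k) (Y (Suc k) v) (Y n v)" using far[OF that, of "Suc k" n] by simp
    then show "sol v $ k = Y n v $ k" by (simp add: sol_def agree_def)
  qed
  have "sol v = sem sol (eqs v)" if v: "v \<in> S" for v
  proof (rule agree_all)
    fix n
    have "agree (Suc n) (sem sol (eqs v)) (sem (Y n) (eqs v))"
      using assms v solY by (intro sem_agree_guarded) blast+
    then have "agree n (sem sol (eqs v)) (Y (Suc n) v)" unfolding YS
      by (rule agree_mono) simp
    moreover have "agree n (Y (Suc n) v) (sol v)"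
      using agree_sym[OF agree_mono[OF solY[OF v, of "Suc n"]]] by simp
    ultimately have "agree n (sem sol (eqs v)) (sol v)"
      by (rule agree_trans)
    then show "agree n (sol v) (sem sol (eqs v))"
      by (rule agree_sym)
  qed
  then show ?thesis by blast
qed


lemma sem_cong: "(\<forall>v\<in>pvars e. f v = g v) \<Longrightarrow> sem f e = sem g e"
  by (induction e) auto

primrec terms :: "'v pexp \<Rightarrow> (real \<times> nat \<times> 'v list) list" where
  "terms (PC p n) = map (\<lambda>b. (p $ b, b, [])) [0..<Suc n]"
| "terms (PV v) = [(1, 0, [v])]"
| "terms (PAdd a b) = terms a @ terms b"
| "terms (PMul a b) = concat (map (\<lambda>t1. map (\<lambda>t2.
      (fst t1 * fst t2, fst (snd t1) + fst (snd t2), snd (snd t1) @ snd (snd t2))) (terms b)) (terms a))"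
| "terms (PX a) = map (\<lambda>t. (fst t, Suc (fst (snd t)), snd (snd t))) (terms a)"

definition tsem :: "('v \<Rightarrow> real fps) \<Rightarrow> real \<times> nat \<times> 'v list \<Rightarrow> real fps" where
  "tsem f t = fps_const (fst t) * fps_X ^ fst (snd t) * prod_list (map f (snd (snd t)))"

lemma sum_list_concat_map:
  "sum_list (map g (concat (map h xs))) = sum_list (map (\<lambda>x. sum_list (map g (h x))) xs)"
  by (induction xs) auto

lemma tsem_mul: "tsem f (fst t1 * fst t2, fst (snd t1) + fst (snd t2), snd (snd t1) @ snd (snd t2))
   = tsem f t1 * tsem f t2"
  by (simp add: tsem_def fps_const_mult[symmetric] power_add mult_ac del: fps_const_mult)

lemma tsem_X: "tsem f (fst t, Suc (fst (snd t)), snd (snd t)) = fps_X * tsem f t"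
  by (simp add: tsem_def mult_ac)

lemma sem_terms: "sem f e = sum_list (map (tsem f) (terms e))"
proof (induction e)
  case (PC p n)
  have "sum_list (map (tsem f) (terms (PC p n))) = (\<Sum>b\<in>{0..<Suc n}. fps_const (p $ b) * fps_X ^ b)"
    by (simp add: tsem_def o_def flip: sum_set_upt_conv_sum_list_nat)
  also have "\<dots> = sem f (PC p n)"
    by (simp add: atLeast0LessThan lessThan_Suc_atMost)
  finally show ?case ..
next
  case (PMul a b)
  have "sum_list (map (tsem f) (terms (PMul a b))) =
      sum_list (map (\<lambda>t1. sum_list (map (\<lambda>t2. tsem f t1 * tsem f t2) (terms b))) (terms a))"
    unfolding terms.simps sum_list_concat_map
    by (simp add: tsem_mul o_def)
  also have "\<dots> = sem f a * sem f b"
    by (simp add: PMul sum_list_const_mult sum_list_mult_const o_def)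
  finally show ?case by simp
next
  case (PX a)
  then show ?case
    by (simp add: tsem_X o_def sum_list_const_mult)
qed (auto simp: tsem_def)

lemma terms_nonneg: "pnonneg e \<Longrightarrow> t \<in> set (terms e) \<Longrightarrow> fst t \<ge> 0"
  by (induction e arbitrary: t) auto

lemma terms_vars: "t \<in> set (terms e) \<Longrightarrow> set (snd (snd t)) \<subseteq> pvars e"
  apply (induction e arbitrary: t) apply auto apply blast+ done


definition idx :: "'v list \<Rightarrow> 'v \<Rightarrow> nat" where
  "idx vs v = (THE i. i < length vs \<and> vs ! i = v)"

lemma idx: "distinct vs \<Longrightarrow> v \<in> set vs \<Longrightarrow> idx vs v < length vs \<and> vs ! idx vs v = v"
  unfolding idx_def by (rule theI') (rule distinct_Ex1)

lemma idx_nth: "distinct vs \<Longrightarrow> i < length vs \<Longrightarrow> idx vs (vs ! i) = i"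
  unfolding idx_def by (rule the_equality) (auto simp: nth_eq_iff_index_eq)

definition expo :: "'v list \<Rightarrow> 'v list \<Rightarrow> nat \<Rightarrow> nat" where
  "expo vs ws i = (if i < length vs then count_list ws (vs ! i) else 0)"

definition key :: "'v list \<Rightarrow> real \<times> nat \<times> 'v list \<Rightarrow> nat \<times> (nat \<Rightarrow> nat)" where
  "key vs t = (fst (snd t), expo vs (snd (snd t)))"

definition mpoly_of :: "'v list \<Rightarrow> 'v pexp \<Rightarrow> (nat \<times> (nat \<Rightarrow> nat)) \<Rightarrow> real" where
  "mpoly_of vs e = (\<lambda>mn. sum_list (map fst (filter (\<lambda>t. key vs t = mn) (terms e))))"

lemma prod_expo:
  assumes "distinct vs" "set ws \<subseteq> set vs" "length ys = length vs"
  shows "(\<Prod>i<length ys. (ys ! i) ^ expo vs ws i) = prod_list (map (\<lambda>v. ys ! idx vs v) ws)"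
  using assms(2)
proof (induction ws)
  case Nil
  have "expo vs [] i = 0" for i by (simp add: expo_def)
  then show ?case by simp
next
  case (Cons w ws)
  have w: "idx vs w < length vs" "vs ! idx vs w = w" using idx[OF assms(1)] Cons.prems by auto
  have e: "expo vs (w # ws) i = (if i = idx vs w then 1 else 0) + expo vs ws i" if "i < length ys" for i
  proof -
    have "(vs ! i = w) = (i = idx vs w)"
      using that assms(3) w assms(1) by (metis idx_nth)
    then show ?thesis using that assms(3) by (auto simp: expo_def)
  qed
  have "(\<Prod>i<length ys. (ys ! i) ^ expo vs (w # ws) i) =
        (\<Prod>i<length ys. (if i = idx vs w then ys ! i else 1) * (ys ! i) ^ expo vs ws i)"
    by (rule prod.cong) (auto simp: e power_add)
  also have "\<dots> = ys ! idx vs w * (\<Prod>i<length ys. (ys ! i) ^ expo vs ws i)"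
    using w assms(3) by (simp add: prod.distrib)
  also have "\<dots> = prod_list (map (\<lambda>v. ys ! idx vs v) (w # ws))"
    using Cons by simp
  finally show ?case .
qed

lemma group_sum:
  fixes g :: "'a \<Rightarrow> 'b::comm_monoid_add"
  shows "sum_list (map g xs) = (\<Sum>y\<in>k ` set xs. sum_list (map g (filter (\<lambda>x. k x = y) xs)))"
proof (induction xs)
  case Nil
  then show ?case by simp
next
  case (Cons x xs)
  let ?K = "k ` set xs"
  have "(\<Sum>y\<in>k ` set (x # xs). sum_list (map g (filter (\<lambda>z. k z = y) (x # xs)))) =
        (\<Sum>y\<in>insert (k x) ?K. (if k x = y then g x else 0) + sum_list (map g (filter (\<lambda>z. k z = y) xs)))"
    by (rule sum.cong) auto
  also have "\<dots> = g x + (\<Sum>y\<in>insert (k x) ?K. sum_list (map g (filter (\<lambda>z. k z = y) xs)))"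
    by (simp add: sum.distrib)
  also have "(\<Sum>y\<in>insert (k x) ?K. sum_list (map g (filter (\<lambda>z. k z = y) xs))) =
      (\<Sum>y\<in>?K. sum_list (map g (filter (\<lambda>z. k z = y) xs)))"
  proof (cases "k x \<in> ?K")
    case True
    then show ?thesis by (simp add: insert_absorb)
  next
    case False
    then have "filter (\<lambda>z. k z = k x) xs = []" by (metis (mono_tags) filter_empty_conv image_eqI)
    then show ?thesis using False by simp
  qed
  finally show ?case using Cons by simp
qed

lemma eval_mpoly_superset:
  assumes "finite K" "{mn. R mn \<noteq> 0} \<subseteq> K"
  shows "eval_mpoly R ys = (\<Sum>mn\<in>K. fps_const (R mn) * fps_X ^ fst mn *
        (\<Prod>i<length ys. (ys ! i) ^ snd mn i))"
  unfolding eval_mpoly_def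
  by (rule sum.mono_neutral_left) (use assms in \<open>auto intro: finite_subset\<close>)

lemma const_sum_list_mult:
  fixes M :: "real fps" and xs :: "(real \<times> 'b) list"
  shows "fps_const (sum_list (map fst xs)) * M = sum_list (map (\<lambda>t. fps_const (fst t) * M) xs)"
  by (induction xs) (auto simp: distrib_right fps_const_add[symmetric] simp del: fps_const_add)

lemma eval_mpoly_of:
  assumes "distinct vs" "pvars e \<subseteq> set vs" "length ys = length vs"
  shows "eval_mpoly (mpoly_of vs e) ys = sem (\<lambda>v. ys ! idx vs v) e"
proof -
  let ?R = "mpoly_of vs e"
  let ?K = "key vs ` set (terms e)"
  let ?mon = "\<lambda>mn. fps_X ^ fst mn * (\<Prod>i<length ys. (ys ! i) ^ snd mn i)"
  let ?f = "\<lambda>v. ys ! idx vs v"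
  have sub: "{mn. ?R mn \<noteq> 0} \<subseteq> ?K"
  proof
    fix mn assume "mn \<in> {mn. ?R mn \<noteq> 0}"
    then have "filter (\<lambda>t. key vs t = mn) (terms e) \<noteq> []" by (auto simp: mpoly_of_def)
    then show "mn \<in> ?K" by (auto simp: filter_empty_conv)
  qed
  have "eval_mpoly ?R ys = (\<Sum>mn\<in>?K. fps_const (?R mn) * ?mon mn)"
    using eval_mpoly_superset[OF _ sub] by (simp add: mult.assoc)
  also have "\<dots> = (\<Sum>mn\<in>?K. sum_list (map (\<lambda>t. fps_const (fst t) * ?mon (key vs t))
        (filter (\<lambda>t. key vs t = mn) (terms e))))"
  proof (rule sum.cong)
    fix mn assume "mn \<in> ?K"
    have "fps_const (?R mn) * ?mon mn = sum_list (map (\<lambda>t. fps_const (fst t) * ?mon mn)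
        (filter (\<lambda>t. key vs t = mn) (terms e)))"
      unfolding mpoly_of_def by (rule const_sum_list_mult)
    also have "\<dots> = sum_list (map (\<lambda>t. fps_const (fst t) * ?mon (key vs t))
        (filter (\<lambda>t. key vs t = mn) (terms e)))"
      by (rule arg_cong[where f = sum_list], rule map_cong) auto
    finally show "fps_const (?R mn) * ?mon mn = \<dots>" .
  qed simp
  also have "\<dots> = sum_list (map (\<lambda>t. fps_const (fst t) * ?mon (key vs t)) (terms e))"
    by (rule group_sum[symmetric])
  also have "\<dots> = sum_list (map (tsem ?f) (terms e))"
  proof (rule arg_cong[where f = sum_list], rule map_cong)
    fix t assume t: "t \<in> set (terms e)"
    have "set (snd (snd t)) \<subseteq> set vs" using terms_vars[OF t] assms(2) by blast
    then show "fps_const (fst t) * ?mon (key vs t) = tsem ?f t"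
      using prod_expo[OF assms(1) _ assms(3)] by (simp add: key_def tsem_def mult.assoc)
  qed simp
  also have "\<dots> = sem ?f e" by (simp add: sem_terms)
  finally show ?thesis .
qed

lemma grammar:
  fixes S :: "'v::linorder set"
  assumes fin: "finite S" and v0: "v0 \<in> S"
    and eqs: "\<forall>v\<in>S. guarded (eqs v) \<and> pnonneg (eqs v) \<and> pvars (eqs v) \<subseteq> S"
    and sol: "\<forall>v\<in>S. val v = sem val (eqs v)"
  shows "finite_grammar (val v0)"
proof -
  define vs where "vs = v0 # sorted_list_of_set (S - {v0})"
  have dvs: "distinct vs" and svs: "set vs = S"
    using fin v0 by (auto simp: vs_def)
  define m where "m = length vs"
  have m1: "m \<ge> 1" by (simp add: m_def vs_def)
  define Rs where "Rs = map (\<lambda>v. mpoly_of vs (eqs v)) vs"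
  define ys where "ys = map val vs"
  have lR: "length Rs = m" by (simp add: Rs_def m_def)
  have nn: "nonneg_mpoly m (Rs ! r)" if r: "r < m" for r
  proof -
    let ?e = "eqs (vs ! r)"
    have vS: "vs ! r \<in> S" using r svs m_def by auto
    have R: "Rs ! r = mpoly_of vs ?e" using r by (simp add: Rs_def m_def)
    have sub: "{mn. mpoly_of vs ?e mn \<noteq> 0} \<subseteq> key vs ` set (terms ?e)"
    proof
      fix mn assume "mn \<in> {mn. mpoly_of vs ?e mn \<noteq> 0}"
      then have "filter (\<lambda>t. key vs t = mn) (terms ?e) \<noteq> []" by (auto simp: mpoly_of_def)
      then show "mn \<in> key vs ` set (terms ?e)" by (auto simp: filter_empty_conv)
    qed
    have "pnonneg ?e" using eqs vS by blast
    then have tn: "\<forall>t\<in>set (terms ?e). fst t \<ge> 0" using terms_nonneg by blast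
    have "mpoly_of vs ?e mn \<ge> 0" for mn
      unfolding mpoly_of_def using tn
      by (intro sum_list_nonneg) auto
    moreover have "snd mn i = 0" if "mpoly_of vs ?e mn \<noteq> 0" "i \<ge> m" for mn i
    proof -
      from that sub obtain t where "mn = key vs t" by auto
      then show ?thesis using that(2) by (simp add: key_def expo_def m_def)
    qed
    ultimately show ?thesis unfolding nonneg_mpoly_def R
      using finite_subset[OF sub] by auto
  qed
  have ev: "eval_mpoly (Rs ! r) zs = sem (\<lambda>v. zs ! idx vs v) (eqs (vs ! r))"
    if "r < m" "length zs = m" for r zs
    using that eval_mpoly_of[OF dvs, of "eqs (vs ! r)" zs] eqs svs
    by (auto simp: Rs_def m_def)
  have ysol: "is_solution Rs ys"
    unfolding is_solution_def
  proof (intro conjI allI impI)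
    show "length ys = length Rs" by (simp add: ys_def Rs_def)
    fix r assume r: "r < length Rs"
    then have rm: "r < m" using lR by simp
    have vS: "vs ! r \<in> S" using rm svs m_def by auto
    have "eval_mpoly (Rs ! r) ys = sem (\<lambda>v. ys ! idx vs v) (eqs (vs ! r))"
      using ev[OF rm] by (simp add: ys_def m_def)
    also have "\<dots> = sem val (eqs (vs ! r))"
    proof (rule sem_cong, rule ballI)
      fix v assume "v \<in> pvars (eqs (vs ! r))"
      then have "v \<in> set vs" using eqs vS svs by auto
      then show "ys ! idx vs v = val v" using idx[OF dvs] by (simp add: ys_def)
    qed
    also have "\<dots> = ys ! r" using sol vS rm by (simp add: ys_def m_def)
    finally show "ys ! r = eval_mpoly (Rs ! r) ys" ..
  qed
  have uniq: "ys' = ys" if ys': "is_solution Rs ys'" for ys'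
  proof -
    have l': "length ys' = m" using ys' lR by (simp add: is_solution_def)
    define g where "g = (\<lambda>v. ys' ! idx vs v)"
    have "\<forall>v\<in>S. g v = sem g (eqs v)"
    proof
      fix v assume vS: "v \<in> S"
      then have i: "idx vs v < m" "vs ! idx vs v = v" using idx[OF dvs] svs m_def by auto
      have "g v = eval_mpoly (Rs ! idx vs v) ys'"
        using ys' i lR by (simp add: g_def is_solution_def)
      also have "\<dots> = sem g (eqs v)" using ev[OF i(1) l'] i by (simp add: g_def)
      finally show "g v = sem g (eqs v)" .
    qed
    then have "\<forall>v\<in>S. g v = val v" using sys_unique[of S eqs g val] eqs sol by blast
    then show ?thesis
    proof (intro nth_equalityI)
      show "length ys' = length ys" using l' by (simp add: ys_def m_def)
      fix r assume "\<forall>v\<in>S. g v = val v" "r < length ys'"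
      then show "ys' ! r = ys ! r"
        using l' svs idx_nth[OF dvs, of r] nth_mem[of r vs] by (auto simp: g_def ys_def m_def)
    qed
  qed
  have "val v0 = ys ! 0" by (simp add: ys_def vs_def)
  then show ?thesis unfolding finite_grammar_def
    using m1 lR nn ysol uniq by blast
qed


definition psum :: "'v pexp list \<Rightarrow> 'v pexp" where
  "psum es = foldr PAdd es (PC 0 0)"

lemma psum_props:
  "sem f (psum es) = sum_list (map (sem f) es)"
  "pvars (psum es) = (\<Union>e\<in>set es. pvars e)"
  "guarded (psum es) = (\<forall>e\<in>set es. guarded e)"
  "pnonneg (psum es) = (\<forall>e\<in>set es. pnonneg e)"
  by (induction es) (auto simp: psum_def)

definition prange :: "nat \<Rightarrow> nat \<Rightarrow> (nat \<Rightarrow> 'v pexp) \<Rightarrow> 'v pexp" where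
  "prange m n g = psum (map g [m..<n])"

lemma prange_props:
  "sem f (prange m n g) = (\<Sum>x\<in>{m..<n}. sem f (g x))"
  "pvars (prange m n g) = (\<Union>x\<in>{m..<n}. pvars (g x))"
  "guarded (prange m n g) = (\<forall>x\<in>{m..<n}. guarded (g x))"
  "pnonneg (prange m n g) = (\<forall>x\<in>{m..<n}. pnonneg (g x))"
  by (auto simp: prange_def psum_props o_def simp flip: sum_set_upt_conv_sum_list_nat)

lemma sem_PC: "(\<forall>b>n. p $ b = 0) \<Longrightarrow> sem f (PC p n) = p"
proof -
  assume z: "\<forall>b>n. p $ b = 0"
  show "sem f (PC p n) = p"
  proof (rule fps_ext)
    fix k
    have "sem f (PC p n) $ k = (\<Sum>b\<le>n. if k = b then p $ b else 0)"
      by (simp add: fps_sum_nth fps_X_power_nth if_distrib cong: if_cong)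
    also have "\<dots> = p $ k" using z by (cases "k \<le> n") auto
    finally show "sem f (PC p n) $ k = p $ k" .
  qed
qed





lemma swap3:
  "(\<Sum>x\<in>A. \<Sum>y\<in>B. \<Sum>z\<in>C. f x y z) = (\<Sum>z\<in>C. \<Sum>x\<in>A. \<Sum>y\<in>B. (f x y z :: 'a::comm_monoid_add))"
proof -
  have "(\<Sum>x\<in>A. \<Sum>y\<in>B. \<Sum>z\<in>C. f x y z) = (\<Sum>x\<in>A. \<Sum>z\<in>C. \<Sum>y\<in>B. f x y z)"
    by (rule sum.cong[OF refl], rule sum.swap)
  also have "\<dots> = (\<Sum>z\<in>C. \<Sum>x\<in>A. \<Sum>y\<in>B. f x y z)"
    by (rule sum.swap)
  finally show ?thesis .
qed

lemma swap4:
  "(\<Sum>a\<in>A. \<Sum>b\<in>B. \<Sum>c\<in>C. \<Sum>e\<in>E. f a b c e) =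
   (\<Sum>c\<in>C. \<Sum>e\<in>E. \<Sum>a\<in>A. \<Sum>b\<in>B. (f a b c e :: 'a::comm_monoid_add))"
proof -
  have "(\<Sum>a\<in>A. \<Sum>b\<in>B. \<Sum>c\<in>C. \<Sum>e\<in>E. f a b c e) = (\<Sum>a\<in>A. \<Sum>c\<in>C. \<Sum>b\<in>B. \<Sum>e\<in>E. f a b c e)"
    by (rule sum.cong[OF refl], rule sum.swap)
  also have "\<dots> = (\<Sum>a\<in>A. \<Sum>c\<in>C. \<Sum>e\<in>E. \<Sum>b\<in>B. f a b c e)"
    by (rule sum.cong[OF refl], rule sum.cong[OF refl], rule sum.swap)
  also have "\<dots> = (\<Sum>c\<in>C. \<Sum>a\<in>A. \<Sum>e\<in>E. \<Sum>b\<in>B. f a b c e)"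
    by (rule sum.swap)
  also have "\<dots> = (\<Sum>c\<in>C. \<Sum>e\<in>E. \<Sum>a\<in>A. \<Sum>b\<in>B. f a b c e)"
    by (rule sum.cong[OF refl], rule sum.swap)
  finally show ?thesis .
qed

lemma ite01_mult: "(if P then 1 else 0) * (x::real fps) = (if P then x else 0)"
  by simp

function Vf :: "(nat \<Rightarrow> nat \<Rightarrow> nat \<Rightarrow> real fps) \<Rightarrow> nat \<Rightarrow> nat \<Rightarrow> nat \<Rightarrow> nat \<Rightarrow> nat \<Rightarrow> nat \<Rightarrow> real fps" where
  "Vf T d N s i j r = (\<Sum>i'<d. \<Sum>r1\<in>{1..N}. T i i' r1 *
     (if r1 \<le> s then Vf T d N (s - r1) i' j r else (if i' = j \<and> r1 - s = r then 1 else 0)))"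
  by auto
termination by (relation "measure (\<lambda>(T,d,N,s,i,j,r). s)") auto

declare Vf.simps[simp del]

definition Wf :: "(nat \<Rightarrow> nat \<Rightarrow> nat \<Rightarrow> real fps) \<Rightarrow> nat \<Rightarrow> nat \<Rightarrow> int \<Rightarrow> nat \<Rightarrow> nat \<Rightarrow> nat \<Rightarrow> real fps" where
  "Wf T d N t i j r = (if t \<ge> 0 then Vf T d N (nat t) i j r else if i = j \<and> t = - int r then 1 else 0)"

lemma Vf_W: "Vf T d N s i j r = (\<Sum>i'<d. \<Sum>r1\<in>{1..N}. T i i' r1 * Wf T d N (int s - int r1) i' j r)"
  apply (subst Vf.simps)
  apply (rule sum.cong[OF refl], rule sum.cong[OF refl])
  apply (auto simp: Wf_def nat_diff_distrib)
  done

lemma Comp: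
  assumes "- int N \<le> t" "i < d"
  shows "(\<Sum>i'<d. \<Sum>r1\<in>{1..N}. Wf T d N t i i' r1 * Wf T d N (int s - int r1) i' j r)
       = Wf T d N (t + int s) i j r"
  using assms
proof (induction "nat (t + int N)" arbitrary: t i rule: less_induct)
  case less
  show ?case
  proof (cases "t \<ge> 0")
    case False
    define q where "q = nat (- t)"
    have q: "q \<in> {1..N}" "t = - int q" using False less.prems by (auto simp: q_def)
    have W0: "Wf T d N t i i' r1 = (if i' = i then (if r1 = q then 1 else 0) else 0)" for i' r1
      using False q by (auto simp: Wf_def)
    have "(\<Sum>i'<d. \<Sum>r1\<in>{1..N}. Wf T d N t i i' r1 * Wf T d N (int s - int r1) i' j r)
        = (\<Sum>i'<d. if i' = i then (\<Sum>r1\<in>{1..N}. if r1 = q then Wf T d N (int s - int r1) i' j r else 0) else 0)"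
      by (intro sum.cong refl) (simp add: W0 ite01_mult)
    also have "\<dots> = Wf T d N (int s - int q) i j r"
      using less.prems q by simp
    finally show ?thesis using q by simp
  next
    case True
    have "(\<Sum>i'<d. \<Sum>r1\<in>{1..N}. Wf T d N t i i' r1 * Wf T d N (int s - int r1) i' j r)
       = (\<Sum>i'<d. \<Sum>r1\<in>{1..N}. \<Sum>i1<d. \<Sum>r2\<in>{1..N}.
            T i i1 r2 * (Wf T d N (t - int r2) i1 i' r1 * Wf T d N (int s - int r1) i' j r))"
      using True
      by (simp add: Wf_def Vf_W[of T d N "nat t"] sum_distrib_right mult.assoc)
    also have "\<dots> = (\<Sum>i1<d. \<Sum>r2\<in>{1..N}. \<Sum>i'<d. \<Sum>r1\<in>{1..N}.
            T i i1 r2 * (Wf T d N (t - int r2) i1 i' r1 * Wf T d N (int s - int r1) i' j r))"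
      by (rule swap4)
    also have "\<dots> = (\<Sum>i1<d. \<Sum>r2\<in>{1..N}. T i i1 r2 * Wf T d N (t - int r2 + int s) i1 j r)"
    proof (intro sum.cong refl)
      fix i1 r2 assume i1: "i1 \<in> {..<d}" and r2: "r2 \<in> {1..N}"
      have "(\<Sum>i'<d. \<Sum>r1\<in>{1..N}. Wf T d N (t - int r2) i1 i' r1 * Wf T d N (int s - int r1) i' j r)
          = Wf T d N (t - int r2 + int s) i1 j r"
        using less.hyps[of "t - int r2" i1] True i1 r2 less.prems by auto
      then show "(\<Sum>i'<d. \<Sum>r1\<in>{1..N}. T i i1 r2 * (Wf T d N (t - int r2) i1 i' r1 * Wf T d N (int s - int r1) i' j r))
          = T i i1 r2 * Wf T d N (t - int r2 + int s) i1 j r"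
        by (metis (no_types, lifting) sum.cong sum_distrib_left)
    qed
    also have "\<dots> = Wf T d N (t + int s) i j r"
      using True by (simp add: Wf_def Vf_W[of T d N "nat (t + int s)"] algebra_simps)
    finally show ?thesis .
  qed
qed


lemma swap5:
  "(\<Sum>x\<in>A. \<Sum>y\<in>B. \<Sum>u\<in>C. \<Sum>v\<in>D. \<Sum>w\<in>E. f x y u v w) =
   (\<Sum>u\<in>C. \<Sum>v\<in>D. \<Sum>w\<in>E. \<Sum>x\<in>A. \<Sum>y\<in>B. (f x y u v w :: 'a::comm_monoid_add))"
proof -
  have "(\<Sum>x\<in>A. \<Sum>y\<in>B. \<Sum>u\<in>C. \<Sum>v\<in>D. \<Sum>w\<in>E. f x y u v w) =
        (\<Sum>u\<in>C. \<Sum>x\<in>A. \<Sum>y\<in>B. \<Sum>v\<in>D. \<Sum>w\<in>E. f x y u v w)"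
    by (rule swap3)
  also have "\<dots> = (\<Sum>u\<in>C. \<Sum>v\<in>D. \<Sum>x\<in>A. \<Sum>y\<in>B. \<Sum>w\<in>E. f x y u v w)"
    by (rule sum.cong[OF refl], rule swap3)
  also have "\<dots> = (\<Sum>u\<in>C. \<Sum>v\<in>D. \<Sum>w\<in>E. \<Sum>x\<in>A. \<Sum>y\<in>B. f x y u v w)"
    by (rule sum.cong[OF refl], rule sum.cong[OF refl], rule swap3)
  finally show ?thesis .
qed

lemma distrib3:
  "(x * (\<Sum>a\<in>A. \<Sum>b\<in>B. \<Sum>e\<in>E. f a b e)) * w = (\<Sum>a\<in>A. \<Sum>b\<in>B. \<Sum>e\<in>E. x * (f a b e * (w::'a::comm_semiring_1)))"
  by (simp add: sum_distrib_left sum_distrib_right mult_ac)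

lemma first_step:
  fixes c :: "nat \<Rightarrow> nat \<Rightarrow> nat \<Rightarrow> real fps"
  assumes Tdef: "\<forall>i'<d. \<forall>r1\<in>{1..N}. T i i' r1 = fps_X * (\<Sum>i''<d. \<Sum>l<Suc L. \<Sum>a<Suc N.
        c i'' l a * Wf T d N (int l - int a) i'' i' r1)"
  shows "Vf T d N s i j r = fps_X * (\<Sum>i''<d. \<Sum>l<Suc L. \<Sum>a<Suc N.
        c i'' l a * Wf T d N (int s + int l - int a) i'' j r)"
proof -
  have "Vf T d N s i j r = (\<Sum>i'<d. \<Sum>r1\<in>{1..N}. T i i' r1 * Wf T d N (int s - int r1) i' j r)"
    by (rule Vf_W)
  also have "\<dots> = (\<Sum>i'<d. \<Sum>r1\<in>{1..N}. \<Sum>i''<d. \<Sum>l<Suc L. \<Sum>a<Suc N.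
       fps_X * (c i'' l a * Wf T d N (int l - int a) i'' i' r1 * Wf T d N (int s - int r1) i' j r))"
  proof (intro sum.cong refl)
    fix i' r1 assume "i' \<in> {..<d}" "r1 \<in> {1..N}"
    then have "T i i' r1 = fps_X * (\<Sum>i''<d. \<Sum>l<Suc L. \<Sum>a<Suc N.
        c i'' l a * Wf T d N (int l - int a) i'' i' r1)" using Tdef by blast
    then show "T i i' r1 * Wf T d N (int s - int r1) i' j r = (\<Sum>i''<d. \<Sum>l<Suc L. \<Sum>a<Suc N.
       fps_X * (c i'' l a * Wf T d N (int l - int a) i'' i' r1 * Wf T d N (int s - int r1) i' j r))"
      by (simp only: distrib3)
  qed
  also have "\<dots> = (\<Sum>i''<d. \<Sum>l<Suc L. \<Sum>a<Suc N. \<Sum>i'<d. \<Sum>r1\<in>{1..N}.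
       fps_X * (c i'' l a * Wf T d N (int l - int a) i'' i' r1 * Wf T d N (int s - int r1) i' j r))"
    by (rule swap5)
  also have "\<dots> = (\<Sum>i''<d. \<Sum>l<Suc L. \<Sum>a<Suc N.
       fps_X * (c i'' l a * Wf T d N (int s + int l - int a) i'' j r))"
  proof (intro sum.cong refl)
    fix i'' l a assume i'': "i'' \<in> {..<d}" and a: "a \<in> {..<Suc N}"
    have "(\<Sum>i'<d. \<Sum>r1\<in>{1..N}. Wf T d N (int l - int a) i'' i' r1 * Wf T d N (int s - int r1) i' j r)
       = Wf T d N (int s + int l - int a) i'' j r"
      using a i'' Comp[of N "int l - int a" i'' d T s j r] by (simp add: algebra_simps)
    then show "(\<Sum>i'<d. \<Sum>r1\<in>{1..N}.
       fps_X * (c i'' l a * Wf T d N (int l - int a) i'' i' r1 * Wf T d N (int s - int r1) i' j r))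
       = fps_X * (c i'' l a * Wf T d N (int s + int l - int a) i'' j r)"
      by (simp add: sum_distrib_left[symmetric] mult.assoc del: sum.lessThan_Suc)
  qed
  also have "\<dots> = fps_X * (\<Sum>i''<d. \<Sum>l<Suc L. \<Sum>a<Suc N.
        c i'' l a * Wf T d N (int s + int l - int a) i'' j r)"
    by (simp add: sum_distrib_left del: sum.lessThan_Suc)
  finally show ?thesis .
qed





type_synonym var = "nat \<times> nat \<times> nat \<times> nat \<times> nat"

definition FV :: "nat \<Rightarrow> nat \<Rightarrow> var" where "FV i k = (0, i, k, 0, 0)"
definition VV :: "nat \<Rightarrow> nat \<Rightarrow> nat \<Rightarrow> nat \<Rightarrow> var" where "VV i s j r = (1, i, s, j, r)"

lemma FV_VV_distinct [simp]: "FV i k \<noteq> VV i' s j r" "VV i' s j r \<noteq> FV i k"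
  "FV i k = FV i' k' \<longleftrightarrow> i = i' \<and> k = k'"
  "VV i s j r = VV i' s' j' r' \<longleftrightarrow> i = i' \<and> s = s' \<and> j = j' \<and> r = r'"
  by (auto simp: FV_def VV_def)

definition Wref :: "nat \<Rightarrow> int \<Rightarrow> nat \<Rightarrow> nat \<Rightarrow> var pexp" where
  "Wref i t j r = (if t \<ge> 0 then PV (VV i (nat t) j r)
     else if i = j \<and> t = - int r then PC 1 0 else PC 0 0)"

definition Tx :: "(nat \<Rightarrow> nat \<Rightarrow> nat \<Rightarrow> nat \<Rightarrow> real fps) \<Rightarrow> nat \<Rightarrow> nat \<Rightarrow> nat \<Rightarrow> nat \<Rightarrow> nat \<Rightarrow> nat \<Rightarrow> var pexp" where
  "Tx c d L N i i' r1 = PX (prange 0 d (\<lambda>i''. prange 0 (Suc L) (\<lambda>l. prange 0 (Suc N) (\<lambda>a.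
      PMul (PC (c i i'' l a) N) (Wref i'' (int l - int a) i' r1)))))"

definition eqV :: "(nat \<Rightarrow> nat \<Rightarrow> nat \<Rightarrow> nat \<Rightarrow> real fps) \<Rightarrow> nat \<Rightarrow> nat \<Rightarrow> nat \<Rightarrow> nat \<Rightarrow> nat \<Rightarrow> nat \<Rightarrow> nat \<Rightarrow> var pexp" where
  "eqV c d L N i s j r = prange 0 d (\<lambda>i'. prange 1 (Suc N) (\<lambda>r1.
      PMul (Tx c d L N i i' r1) (Wref i' (int s - int r1) j r)))"

definition Fref :: "nat \<Rightarrow> nat \<Rightarrow> nat \<Rightarrow> nat \<Rightarrow> nat \<Rightarrow> var pexp" where
  "Fref d N H j n = (if n < H then PV (FV j n) else prange 0 d (\<lambda>j'. prange 1 (Suc N) (\<lambda>r.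
      PMul (PV (VV j (n - H) j' r)) (PV (FV j' (H - r))))))"

definition eqF :: "(nat \<Rightarrow> real fps fps) \<Rightarrow> (nat \<Rightarrow> nat \<Rightarrow> nat \<Rightarrow> nat \<Rightarrow> real fps) \<Rightarrow> nat \<Rightarrow> nat \<Rightarrow> nat \<Rightarrow> nat \<Rightarrow> nat \<Rightarrow> nat \<Rightarrow> var pexp" where
  "eqF P c d L N H i k = PAdd (PC (P i $ k) N) (PX (prange 0 d (\<lambda>j. prange 0 (Suc L) (\<lambda>l.
      prange 0 (Suc k) (\<lambda>a. PMul (PC (c i j l a) N) (Fref d N H j (k - a + l)))))))"

definition eqs :: "(nat \<Rightarrow> real fps fps) \<Rightarrow> (nat \<Rightarrow> nat \<Rightarrow> nat \<Rightarrow> nat \<Rightarrow> real fps) \<Rightarrow> nat \<Rightarrow> nat \<Rightarrow> nat \<Rightarrow> nat \<Rightarrow> var \<Rightarrow> var pexp" where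
  "eqs P c d L N H v = (case v of (t, i, s, j, r) \<Rightarrow>
      if t = 0 then eqF P c d L N H i s else eqV c d L N i s j r)"

lemma eqs_FV [simp]: "eqs P c d L N H (FV i k) = eqF P c d L N H i k"
  by (simp add: eqs_def FV_def)
lemma eqs_VV [simp]: "eqs P c d L N H (VV i s j r) = eqV c d L N i s j r"
  by (simp add: eqs_def VV_def)

definition Sset :: "nat \<Rightarrow> nat \<Rightarrow> nat \<Rightarrow> nat \<Rightarrow> var set" where
  "Sset d L N H = {FV i k | i k. i < d \<and> k < H} \<union>
     {VV i s j r | i s j r. i < d \<and> s \<le> L \<and> j < d \<and> r \<in> {1..N}}"

lemma Sset_finite: "finite (Sset d L N H)"
proof -
  have "Sset d L N H \<subseteq> {..1} \<times> {..<d} \<times> {..H+L} \<times> {..<d} \<times> {..N}"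
    by (auto simp: Sset_def FV_def VV_def)
  then show ?thesis by (rule finite_subset) auto
qed

lemma FV_in [simp]: "FV i k \<in> Sset d L N H \<longleftrightarrow> i < d \<and> k < H"
  by (auto simp: Sset_def)
lemma VV_in [simp]: "VV i s j r \<in> Sset d L N H \<longleftrightarrow> i < d \<and> s \<le> L \<and> j < d \<and> 1 \<le> r \<and> r \<le> N"
  by (auto simp: Sset_def)

lemma pnonneg_Wref [simp]: "pnonneg (Wref i t j r)"
  by (simp add: Wref_def)

lemma Wref_props:
  assumes "i < d" "j < d" "r \<in> {1..N}" "t \<le> int L"
  shows "pvars (Wref i t j r) \<subseteq> Sset d L N H" "pnonneg (Wref i t j r)"
  using assms by (auto simp: Wref_def)

lemma Tx_props:
  assumes "\<forall>i<d. \<forall>j<d. \<forall>l\<le>L. \<forall>a b. (c i j l a) $ b \<ge> 0"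
    and "i < d" "i' < d" "r1 \<in> {1..N}"
  shows "pvars (Tx c d L N i i' r1) \<subseteq> Sset d L N H" "pnonneg (Tx c d L N i i' r1)"
    "xg (Tx c d L N i i' r1)"
  using assms
  by (simp_all add: Tx_def prange_props UN_subset_iff Wref_props)

lemma Fref_props:
  assumes "j < d" "n < H + L" "0 < H"
  shows "pvars (Fref d N H j n) \<subseteq> Sset d L N H" "pnonneg (Fref d N H j n)"
  using assms by (auto simp: Fref_def prange_props)

lemma eqs_props:
  assumes c0: "\<forall>i<d. \<forall>j<d. \<forall>l\<le>L. \<forall>a b. (c i j l a) $ b \<ge> 0"
    and P0: "\<forall>i<d. \<forall>k b. P i $ k $ b \<ge> 0"
    and v: "v \<in> Sset d L N H" and HN: "N < H"
  shows "guarded (eqs P c d L N H v) \<and> pnonneg (eqs P c d L N H v) \<and> pvars (eqs P c d L N H v) \<subseteq> Sset d L N H"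
proof -
  consider (F) i k where "v = FV i k" "i < d" "k < H"
    | (V) i s j r where "v = VV i s j r" "i < d" "s \<le> L" "j < d" "r \<in> {1..N}"
    using v by (auto simp: Sset_def)
  then show ?thesis
  proof cases
    case F
    have fr: "pvars (Fref d N H j n) \<subseteq> Sset d L N H \<and> pnonneg (Fref d N H j n)"
      if "j < d" "n < H + L" for j n
      using Fref_props[of j d n H L N] that F HN by auto
    have "\<forall>x\<in>{0..<d}. \<forall>xa\<in>{0..<Suc L}. \<forall>xb\<in>{0..<Suc k}.
      pnonneg (Fref d N H x (k + xa - xb)) \<and> pvars (Fref d N H x (k + xa - xb)) \<subseteq> Sset d L N H"
      using fr F by auto
    then show ?thesis using F c0 P0
      by (simp add: eqF_def prange_props UN_subset_iff)
  next
    case V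
    have "pvars (Wref i' (int s - int r1) j r) \<subseteq> Sset d L N H" if "i' < d" for i' r1
      using Wref_props(1)[of i' d j r N "int s - int r1" L H] that V by auto
    moreover have "pvars (Tx c d L N i i' r1) \<subseteq> Sset d L N H \<and> xg (Tx c d L N i i' r1)
        \<and> pnonneg (Tx c d L N i i' r1)"
      if "i' < d" "r1 \<in> {1..N}" for i' r1
      using Tx_props[OF c0 V(2) that] by blast
    ultimately show ?thesis using V
      by (simp add: eqV_def prange_props UN_subset_iff)
  qed
qed


lemma sem_Wref: "sem f (Wref i t j r) = (if t \<ge> 0 then f (VV i (nat t) j r)
     else if i = j \<and> t = - int r then 1 else 0)"
  by (simp add: Wref_def)

lemma sem_Tx:
  assumes cB: "\<forall>i''<d. \<forall>l\<le>L. \<forall>a b. N < b \<longrightarrow> c i i'' l a $ b = 0"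
  shows "sem f (Tx c d L N i i' r1) = fps_X * (\<Sum>i''<d. \<Sum>l<Suc L. \<Sum>a<Suc N.
      c i i'' l a * sem f (Wref i'' (int l - int a) i' r1))"
proof -
  have "sem f (PC (c i i'' l a) N) = c i i'' l a" if "i'' < d" "l < Suc L" for i'' l a
    using cB that by (intro sem_PC) auto
  then show ?thesis
    by (simp add: Tx_def prange_props atLeast0LessThan del: sum.lessThan_Suc)
qed

lemma sem_eqV:
  "sem f (eqV c d L N i s j r) = (\<Sum>i'<d. \<Sum>r1\<in>{1..N}.
      sem f (Tx c d L N i i' r1) * sem f (Wref i' (int s - int r1) j r))"
  by (simp add: eqV_def prange_props atLeast0LessThan atLeastLessThanSuc_atLeastAtMost
      del: sum.lessThan_Suc)

lemma sem_Fref: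
  "sem f (Fref d N H j n) = (if n < H then f (FV j n) else (\<Sum>j'<d. \<Sum>r\<in>{1..N}.
      f (VV j (n - H) j' r) * f (FV j' (H - r))))"
  by (simp add: Fref_def prange_props atLeast0LessThan atLeastLessThanSuc_atLeastAtMost
      del: sum.lessThan_Suc)

lemma sem_eqF:
  assumes cB: "\<forall>j<d. \<forall>l\<le>L. \<forall>a b. N < b \<longrightarrow> c i j l a $ b = 0"
    and PB: "\<forall>b. N < b \<longrightarrow> P i $ k $ b = 0"
  shows "sem f (eqF P c d L N H i k) = P i $ k + fps_X * (\<Sum>j<d. \<Sum>l<Suc L. \<Sum>a<Suc k.
      c i j l a * sem f (Fref d N H j (k - a + l)))"
proof -
  have "sem f (PC (c i j l a) N) = c i j l a" if "j < d" "l < Suc L" for j l a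
    using cB that by (intro sem_PC) auto
  moreover have "sem f (PC (P i $ k) N) = P i $ k" using PB by (intro sem_PC) auto
  ultimately show ?thesis
    by (simp add: eqF_def prange_props atLeast0LessThan del: sum.lessThan_Suc)
qed

definition CS :: "(nat \<Rightarrow> real fps fps) \<Rightarrow> (nat \<Rightarrow> nat \<Rightarrow> nat \<Rightarrow> nat \<Rightarrow> real fps) \<Rightarrow> nat \<Rightarrow> nat \<Rightarrow> (nat \<Rightarrow> nat \<Rightarrow> real fps) \<Rightarrow> bool" where
  "CS P c d L G \<longleftrightarrow> (\<forall>i<d. \<forall>k. G i k = P i $ k + fps_X *
     (\<Sum>j<d. \<Sum>l<Suc L. \<Sum>a<Suc k. c i j l a * G j (k - a + l)))"

lemma agree_sum: "(\<forall>x\<in>A. agree m (f x) (g x)) \<Longrightarrow> agree m (sum f A) (sum g A)"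
  unfolding agree_def by (simp add: fps_sum_nth)

lemma CS_unique:
  assumes "CS P c d L G1" "CS P c d L G2"
  shows "\<forall>i<d. \<forall>k. G1 i k = G2 i k"
proof -
  have "\<forall>i<d. \<forall>k. agree m (G1 i k) (G2 i k)" for m
  proof (induction m)
    case 0 then show ?case by (simp add: agree_def)
  next
    case (Suc m)
    show ?case
    proof (intro allI impI)
      fix i k assume i: "i < d"
      have "agree m (\<Sum>j<d. \<Sum>l<Suc L. \<Sum>a<Suc k. c i j l a * G1 j (k - a + l))
                     (\<Sum>j<d. \<Sum>l<Suc L. \<Sum>a<Suc k. c i j l a * G2 j (k - a + l))"
        using Suc i by (intro agree_sum ballI agree_mult agree_refl) blast
      then have "agree (Suc m) (P i $ k + fps_X * (\<Sum>j<d. \<Sum>l<Suc L. \<Sum>a<Suc k. c i j l a * G1 j (k - a + l)))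
                     (P i $ k + fps_X * (\<Sum>j<d. \<Sum>l<Suc L. \<Sum>a<Suc k. c i j l a * G2 j (k - a + l)))"
        by (intro agree_add agree_refl agree_X)
      moreover have e1: "G1 i k = P i $ k + fps_X * (\<Sum>j<d. \<Sum>l<Suc L. \<Sum>a<Suc k. c i j l a * G1 j (k - a + l))"
        using assms(1) i unfolding CS_def by blast
      moreover have e2: "G2 i k = P i $ k + fps_X * (\<Sum>j<d. \<Sum>l<Suc L. \<Sum>a<Suc k. c i j l a * G2 j (k - a + l))"
        using assms(2) i unfolding CS_def by blast
      ultimately show "agree (Suc m) (G1 i k) (G2 i k)"
        by (subst e1, subst e2)
    qed
  qed
  then show ?thesis by (auto intro: agree_all)
qed


lemma main_grammar:
  fixes P :: "nat \<Rightarrow> real fps fps" and c :: "nat \<Rightarrow> nat \<Rightarrow> nat \<Rightarrow> nat \<Rightarrow> real fps"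
    and Fc :: "nat \<Rightarrow> nat \<Rightarrow> real fps"
  assumes c0: "\<forall>i<d. \<forall>j<d. \<forall>l\<le>L. \<forall>a b. c i j l a $ b \<ge> 0"
    and cB: "\<forall>i<d. \<forall>j<d. \<forall>l\<le>L. \<forall>a b. (N < a \<or> N < b) \<longrightarrow> c i j l a $ b = 0"
    and P0: "\<forall>i<d. \<forall>k b. P i $ k $ b \<ge> 0"
    and PB: "\<forall>i<d. \<forall>k b. (N < k \<or> N < b) \<longrightarrow> P i $ k $ b = 0"
    and N1: "1 \<le> N"
    and CSF: "CS P c d L Fc"
    and i0: "i0 < d"
  shows "finite_grammar (Fc i0 k0)"
proof -
  define H where "H = max (Suc N) (Suc k0)"
  have HN: "N < H" "k0 < H" by (auto simp: H_def)
  let ?S = "Sset d L N H"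
  let ?E = "eqs P c d L N H"
  have props: "\<forall>v\<in>?S. guarded (?E v) \<and> pnonneg (?E v) \<and> pvars (?E v) \<subseteq> ?S"
    using eqs_props[OF c0 P0 _ HN(1)] by blast
  then have props': "\<forall>v\<in>?S. guarded (?E v) \<and> pvars (?E v) \<subseteq> ?S" by blast
  obtain val where sol: "\<forall>v\<in>?S. val v = sem val (?E v)"
    using sys_exists[OF props'] by blast
  define T where "T = (\<lambda>i i' r1. sem val (Tx c d L N i i' r1))"
  have VVeq: "val (VV i s j r) = (\<Sum>i'<d. \<Sum>r1\<in>{1..N}. T i i' r1 * sem val (Wref i' (int s - int r1) j r))"
    if "i < d" "s \<le> L" "j < d" "r \<in> {1..N}" for i s j r
    using sol[rule_format, of "VV i s j r"] that by (simp add: sem_eqV T_def)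
  have Vf_val: "Vf T d N s i j r = val (VV i s j r)"
    if "s \<le> L" "i < d" "j < d" "r \<in> {1..N}" for s i j r
    using that
  proof (induction s arbitrary: i rule: less_induct)
    case (less s)
    have "Vf T d N s i j r = (\<Sum>i'<d. \<Sum>r1\<in>{1..N}. T i i' r1 * Wf T d N (int s - int r1) i' j r)"
      by (rule Vf_W)
    also have "\<dots> = (\<Sum>i'<d. \<Sum>r1\<in>{1..N}. T i i' r1 * sem val (Wref i' (int s - int r1) j r))"
    proof (intro sum.cong refl)
      fix i' r1 assume i': "i' \<in> {..<d}" and r1: "r1 \<in> {1..N}"
      have "Wf T d N (int s - int r1) i' j r = sem val (Wref i' (int s - int r1) j r)"
      proof (cases "r1 \<le> s")
        case True
        then have "Vf T d N (s - r1) i' j r = val (VV i' (s - r1) j r)"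
          using less.IH[of "s - r1" i'] less.prems i' r1 by auto
        then show ?thesis using True by (simp add: Wf_def sem_Wref of_nat_diff[symmetric] del: of_nat_diff)
      next
        case False
        then show ?thesis by (simp add: Wf_def sem_Wref)
      qed
      then show "T i i' r1 * Wf T d N (int s - int r1) i' j r = T i i' r1 * sem val (Wref i' (int s - int r1) j r)"
        by simp
    qed
    also have "\<dots> = val (VV i s j r)" using VVeq less.prems by simp
    finally show ?case .
  qed
  have Wf_eq: "Wf T d N t i j r = sem val (Wref i t j r)"
    if "t \<le> int L" "i < d" "j < d" "r \<in> {1..N}" for t i j r
    using Vf_val[of "nat t" i j r] that by (auto simp: Wf_def sem_Wref)
  have Tdef: "\<forall>i'<d. \<forall>r1\<in>{1..N}. T i i' r1 = fps_X * (\<Sum>i''<d. \<Sum>l<Suc L. \<Sum>a<Suc N.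
        c i i'' l a * Wf T d N (int l - int a) i'' i' r1)" if i: "i < d" for i
  proof (intro allI impI ballI)
    fix i' r1 assume i': "i' < d" and r1: "r1 \<in> {1..N}"
    have "T i i' r1 = fps_X * (\<Sum>i''<d. \<Sum>l<Suc L. \<Sum>a<Suc N.
        c i i'' l a * sem val (Wref i'' (int l - int a) i' r1))"
      unfolding T_def using cB i by (intro sem_Tx) auto
    also have "\<dots> = fps_X * (\<Sum>i''<d. \<Sum>l<Suc L. \<Sum>a<Suc N.
        c i i'' l a * Wf T d N (int l - int a) i'' i' r1)"
      using Wf_eq i' r1 by (intro arg_cong2[where f = "(*)"] sum.cong refl) auto
    finally show "T i i' r1 = \<dots>" .
  qed
  have FS: "Vf T d N s i j r = fps_X * (\<Sum>i''<d. \<Sum>l<Suc L. \<Sum>a<Suc N.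
        c i i'' l a * Wf T d N (int s + int l - int a) i'' j r)" if "i < d" for s i j r
    by (rule first_step[OF Tdef[OF that]])
  define G where "G = (\<lambda>i k. if k < H then val (FV i k) else
     (\<Sum>j'<d. \<Sum>r\<in>{1..N}. Vf T d N (k - H) i j' r * val (FV j' (H - r))))"
  have Fref_G: "sem val (Fref d N H j n) = G j n" if "j < d" "n < H + L" for j n
  proof (cases "n < H")
    case True then show ?thesis by (simp add: sem_Fref G_def)
  next
    case False
    have "val (VV j (n - H) j' r) = Vf T d N (n - H) j j' r" if "j' < d" "r \<in> {1..N}" for j' r
      using Vf_val[of "n - H" j j' r] that \<open>j < d\<close> \<open>n < H + L\<close> by auto
    then show ?thesis using False by (simp add: sem_Fref G_def)
  qed
  have IC: "(\<Sum>j'<d. \<Sum>r\<in>{1..N}. Wf T d N (int (k - H) + int l - int a) i'' j' r * val (FV j' (H - r)))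
      = G i'' (k - a + l)" if "H \<le> k" "i'' < d" "a \<le> N" for k l a i''
  proof (cases "int (k - H) + int l - int a \<ge> 0")
    case True
    then have "nat (int (k - H) + int l - int a) = k - a + l - H" and "\<not> k - a + l < H"
      using that HN by (simp_all add: nat_eq_iff of_nat_diff)
    then show ?thesis using True by (simp add: Wf_def G_def)
  next
    case False
    define q where "q = nat (- (int (k - H) + int l - int a))"
    have q: "q \<in> {1..N}" "H - q = k - a + l" "k - a + l < H"
      using False that HN by (auto simp: q_def)
    have "(\<Sum>j'<d. \<Sum>r\<in>{1..N}. Wf T d N (int (k - H) + int l - int a) i'' j' r * val (FV j' (H - r)))
      = (\<Sum>j'<d. if j' = i'' then (\<Sum>r\<in>{1..N}. if r = q then val (FV j' (H - r)) else 0) else 0)"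
    proof -
      have W0: "Wf T d N (int (k - H) + int l - int a) i'' j' r = (if j' = i'' then (if r = q then 1 else 0) else 0)" for j' r
        using False by (auto simp: Wf_def q_def)
      show ?thesis by (intro sum.cong refl) (simp add: W0 ite01_mult)
    qed
    also have "\<dots> = val (FV i'' (H - q))" using q that by simp
    finally show ?thesis using q by (simp add: G_def)
  qed
  have CSG: "CS P c d L G"
    unfolding CS_def
  proof (intro allI impI)
    fix i k assume i: "i < d"
    show "G i k = P i $ k + fps_X * (\<Sum>j<d. \<Sum>l<Suc L. \<Sum>a<Suc k. c i j l a * G j (k - a + l))"
    proof (cases "k < H")
      case True
      have "G i k = sem val (eqF P c d L N H i k)"
        using sol[rule_format, of "FV i k"] True i by (simp add: G_def)
      also have "\<dots> = P i $ k + fps_X * (\<Sum>j<d. \<Sum>l<Suc L. \<Sum>a<Suc k.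
          c i j l a * sem val (Fref d N H j (k - a + l)))"
        using cB PB i by (intro sem_eqF) auto
      also have "\<dots> = P i $ k + fps_X * (\<Sum>j<d. \<Sum>l<Suc L. \<Sum>a<Suc k. c i j l a * G j (k - a + l))"
        using Fref_G True by (intro arg_cong2[where f = "(+)"] arg_cong2[where f = "(*)"] sum.cong refl) auto
      finally show ?thesis .
    next
      case False
      then have kH: "H \<le> k" "N < k" using HN by auto
      have P0k: "P i $ k = 0"
        by (rule fps_ext) (use PB i kH in auto)
      have c0k: "c i j l a = 0" if "j < d" "l < Suc L" "N < a" for j l a
        by (rule fps_ext) (use cB i that in auto)
      have "G i k = (\<Sum>j'<d. \<Sum>r\<in>{1..N}. Vf T d N (k - H) i j' r * val (FV j' (H - r)))"
        using False by (simp add: G_def)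
      also have "\<dots> = (\<Sum>j'<d. \<Sum>r\<in>{1..N}. (fps_X * (\<Sum>i''<d. \<Sum>l<Suc L. \<Sum>a<Suc N.
          c i i'' l a * Wf T d N (int (k - H) + int l - int a) i'' j' r)) * val (FV j' (H - r)))"
        using FS[OF i] by simp
      also have "\<dots> = (\<Sum>j'<d. \<Sum>r\<in>{1..N}. \<Sum>i''<d. \<Sum>l<Suc L. \<Sum>a<Suc N.
          fps_X * (c i i'' l a * Wf T d N (int (k - H) + int l - int a) i'' j' r * val (FV j' (H - r))))"
        by (simp only: distrib3)
      also have "\<dots> = (\<Sum>i''<d. \<Sum>l<Suc L. \<Sum>a<Suc N. \<Sum>j'<d. \<Sum>r\<in>{1..N}.
          fps_X * (c i i'' l a * Wf T d N (int (k - H) + int l - int a) i'' j' r * val (FV j' (H - r))))"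
        by (rule swap5)
      also have "\<dots> = (\<Sum>i''<d. \<Sum>l<Suc L. \<Sum>a<Suc N. fps_X * (c i i'' l a * G i'' (k - a + l)))"
      proof (intro sum.cong refl)
        fix i'' l a assume i'': "i'' \<in> {..<d}" and a: "a \<in> {..<Suc N}"
        have "(\<Sum>j'<d. \<Sum>r\<in>{1..N}. Wf T d N (int (k - H) + int l - int a) i'' j' r * val (FV j' (H - r)))
          = G i'' (k - a + l)" using IC[of k i'' a l] kH i'' a by auto
        then show "(\<Sum>j'<d. \<Sum>r\<in>{1..N}.
          fps_X * (c i i'' l a * Wf T d N (int (k - H) + int l - int a) i'' j' r * val (FV j' (H - r))))
          = fps_X * (c i i'' l a * G i'' (k - a + l))"
          by (simp add: sum_distrib_left[symmetric] mult.assoc del: sum.lessThan_Suc)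
      qed
      also have "\<dots> = fps_X * (\<Sum>j<d. \<Sum>l<Suc L. \<Sum>a<Suc N. c i j l a * G j (k - a + l))"
        by (simp add: sum_distrib_left del: sum.lessThan_Suc)
      also have "\<dots> = fps_X * (\<Sum>j<d. \<Sum>l<Suc L. \<Sum>a<Suc k. c i j l a * G j (k - a + l))"
      proof (rule arg_cong[where f = "\<lambda>x. fps_X * x"], rule sum.cong[OF refl], rule sum.cong[OF refl])
        fix j l assume j: "j \<in> {..<d}" and l: "l \<in> {..<Suc L}"
        show "(\<Sum>a<Suc N. c i j l a * G j (k - a + l)) = (\<Sum>a<Suc k. c i j l a * G j (k - a + l))"
          using kH c0k j l by (intro sum.mono_neutral_left) auto
      qed
      finally show ?thesis using P0k by simp
    qed
  qed
  have "G i0 k0 = Fc i0 k0" using CS_unique[OF CSG CSF] i0 by blast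
  moreover have "G i0 k0 = val (FV i0 k0)" using HN by (simp add: G_def)
  moreover have "FV i0 k0 \<in> ?S" using i0 HN by simp
  ultimately show ?thesis using grammar[OF Sset_finite _ props sol] by metis
qed


lemma uniform_bound:
  fixes g :: "'a \<Rightarrow> nat \<Rightarrow> nat \<Rightarrow> real"
  assumes "finite A" "\<forall>x\<in>A. \<exists>N::nat. \<forall>k n. (N < k \<or> N < n) \<longrightarrow> g x k n = 0"
  shows "\<exists>N::nat. \<forall>x\<in>A. \<forall>k n. (N < k \<or> N < n) \<longrightarrow> g x k n = 0"
proof -
  obtain f where f: "\<forall>x\<in>A. \<forall>k n. (f x < k \<or> f x < n) \<longrightarrow> g x k n = 0"
    using bchoice[OF assms(2)] by blast
  have "f x \<le> sum f A" if "x \<in> A" for x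
    using assms(1) that by (intro member_le_sum) auto
  then have "\<forall>x\<in>A. \<forall>k n. (sum f A < k \<or> sum f A < n) \<longrightarrow> g x k n = 0"
    using f by (meson le_less_trans)
  then show ?thesis by blast
qed

theorem theorem1:
  fixes d L :: nat
    and P :: "nat \<Rightarrow> real fps fps"
    and Q :: "nat \<Rightarrow> nat \<Rightarrow> nat \<Rightarrow> real fps fps"
    and F :: "nat \<Rightarrow> real fps fps"
  assumes "d \<ge> 1" and "L \<ge> 1"
    and "\<forall>i<d. nonneg_bipoly (P i)"
    and "\<forall>i<d. \<forall>j<d. \<forall>l\<le>L. nonneg_bipoly (Q i j l)"
    and "\<forall>i<d. F i = P i + fps_const fps_X *
            (\<Sum>j<d. \<Sum>l\<le>L. Q i j l * Delta l (F j))"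
  shows "\<forall>i<d. \<forall>k. finite_grammar (fps_nth (F i) k)"
proof (intro allI impI)
  fix i0 k0 assume i0: "i0 < d"
  obtain N1 where N1: "\<forall>i\<in>{..<d}. \<forall>k n. (N1 < k \<or> N1 < n) \<longrightarrow> P i $ k $ n = 0"
    using uniform_bound[of "{..<d}" "\<lambda>i k n. P i $ k $ n"] assms(3)
    unfolding nonneg_bipoly_def by auto
  obtain N2 where N2: "\<forall>x\<in>{..<d} \<times> {..<d} \<times> {..L}. \<forall>k n. (N2 < k \<or> N2 < n) \<longrightarrow>
      (case x of (i, j, l) \<Rightarrow> Q i j l $ k $ n) = 0"
    using uniform_bound[of "{..<d} \<times> {..<d} \<times> {..L}" "\<lambda>x k n. case x of (i, j, l) \<Rightarrow> Q i j l $ k $ n"] assms(4)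
    unfolding nonneg_bipoly_def by auto
  define N where "N = Suc (max N1 N2)"
  define c where "c = (\<lambda>i j l a. Q i j l $ a)"
  have c0: "\<forall>i<d. \<forall>j<d. \<forall>l\<le>L. \<forall>a b. c i j l a $ b \<ge> 0"
    using assms(4) by (simp add: c_def nonneg_bipoly_def)
  have cB: "\<forall>i<d. \<forall>j<d. \<forall>l\<le>L. \<forall>a b. (N < a \<or> N < b) \<longrightarrow> c i j l a $ b = 0"
  proof (intro allI impI)
    fix i j l a b assume h: "i < d" "j < d" "l \<le> L" "N < a \<or> N < b"
    then have x: "(i, j, l) \<in> {..<d} \<times> {..<d} \<times> {..L}" by simp
    have "N2 < a \<or> N2 < b" using h(4) by (auto simp: N_def)
    then show "c i j l a $ b = 0" using bspec[OF N2 x] unfolding c_def by auto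
  qed
  have P0: "\<forall>i<d. \<forall>k b. P i $ k $ b \<ge> 0"
    using assms(3) by (simp add: nonneg_bipoly_def)
  have PB: "\<forall>i<d. \<forall>k b. (N < k \<or> N < b) \<longrightarrow> P i $ k $ b = 0"
  proof (intro allI impI)
    fix i k b assume h: "i < d" "N < k \<or> N < b"
    then have x: "i \<in> {..<d}" by simp
    have "N1 < k \<or> N1 < b" using h(2) by (auto simp: N_def)
    then show "P i $ k $ b = 0" using bspec[OF N1 x] by auto
  qed
  have CSF: "CS P c d L (\<lambda>i k. F i $ k)"
    unfolding CS_def
  proof (intro allI impI)
    fix i k assume i: "i < d"
    have "F i $ k = (P i + fps_const fps_X * (\<Sum>j<d. \<Sum>l\<le>L. Q i j l * Delta l (F j))) $ k"
      using assms(5) i by simp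
    also have "\<dots> = P i $ k + fps_X * (\<Sum>j<d. \<Sum>l\<le>L. (Q i j l * Delta l (F j)) $ k)"
      by (simp add: fps_sum_nth)
    also have "\<dots> = P i $ k + fps_X * (\<Sum>j<d. \<Sum>l<Suc L. \<Sum>a<Suc k. c i j l a * F j $ (k - a + l))"
      by (simp add: fps_mult_nth Delta_def c_def lessThan_Suc_atMost atLeast0AtMost del: sum.lessThan_Suc)
    finally show "F i $ k = P i $ k + fps_X * (\<Sum>j<d. \<Sum>l<Suc L. \<Sum>a<Suc k. c i j l a * F j $ (k - a + l))" .
  qed
  have "finite_grammar ((\<lambda>i k. F i $ k) i0 k0)"
    by (rule main_grammar[OF c0 cB P0 PB _ CSF i0]) (simp add: N_def)
  then show "finite_grammar (fps_nth (F i0) k0)" by simp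
qed


end
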